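(* Let $K\in\{\mathbb R,\mathbb C,\mathbb H\}$ and let $(E,d)$ be a metric vector space over $K$ such that $d$ is $C_0$-translation invariant and $(C_1,C_2,C_3)$-lipschitz multiplicative. Let $\delta(x,y)=\lim_{n\to\infty}\frac1n d(nx,ny)$ and $E_0=\{x\in E:\ \delta(ux,0)=0\text{ for all }u\in\mathbb U\}$ (equivalently, the maximal linear subspace of $E$ on which $d$ is bounded). Then $E_0$ is a closed subspace of $E$.
   Context: A metric vector space is a topological vector space over $K$ whose topology is generated by the metric $d$. $\mathbb U=\{u\in K:|u|=1\}$. $d$ is $C_0$-translation invariant if $d(x+z,y+z)\le d(x,y)+C_0$ for all $x,y,z$. $(C_1,C_2,C_3)$-lipschitz multiplicative ($C_1\ge1$, $C_2,C_3\ge0$) means $C_1^{-1}|\lambda|d(x,y)-C_2|\lambda|-C_3\le d(\lambda x,\lambda y)\le C_1|\lambda|d(x,y)+C_2|\lambda|+C_3$ for all $\lambda\in K$, $x,y\in E$. (Under these hypotheses the limit defining $\delta$ exists.) *)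

theory Defs
  imports "HOL-Analysis.Analysis"
begin

text \<open>The scalar field K is modelled by a type of class real_normed_div_algebra
  (a real normed associative division algebra with multiplicative norm); by the
  Frobenius/Mazur/Urbanik-Wright classification these are exactly R, C, H
  (up to isometric isomorphism).\<close>

definition left_vector_space :: "('k::real_normed_div_algebra \<Rightarrow> 'e::ab_group_add \<Rightarrow> 'e) \<Rightarrow> bool" where
  "left_vector_space sc \<longleftrightarrow>
     (\<forall>a x y. sc a (x + y) = sc a x + sc a y) \<and>
     (\<forall>a b x. sc (a + b) x = sc a x + sc b x) \<and>
     (\<forall>a b x. sc (a * b) x = sc a (sc b x)) \<and>
     (\<forall>x. sc 1 x = x)"

definition metric_vector_space ::
  "('k::real_normed_div_algebra \<Rightarrow> 'e::ab_group_add \<Rightarrow> 'e) \<Rightarrow> ('e \<Rightarrow> 'e \<Rightarrow> real) \<Rightarrow> bool" where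
  "metric_vector_space sc d \<longleftrightarrow>
     left_vector_space sc \<and>
     Metric_space UNIV d \<and>
     continuous_map (prod_topology (Metric_space.mtopology UNIV d) (Metric_space.mtopology UNIV d))
        (Metric_space.mtopology UNIV d) (\<lambda>(x, y). x + y) \<and>
     continuous_map (prod_topology (euclidean :: 'k topology) (Metric_space.mtopology UNIV d))
        (Metric_space.mtopology UNIV d) (\<lambda>(a, x). sc a x)"

definition translation_invariant_const :: "real \<Rightarrow> ('e::ab_group_add \<Rightarrow> 'e \<Rightarrow> real) \<Rightarrow> bool" where
  "translation_invariant_const C0 d \<longleftrightarrow> (\<forall>x y z. d (x + z) (y + z) \<le> d x y + C0)"

definition lipschitz_multiplicative ::
  "real \<Rightarrow> real \<Rightarrow> real \<Rightarrow> ('k::real_normed_div_algebra \<Rightarrow> 'e \<Rightarrow> 'e) \<Rightarrow> ('e \<Rightarrow> 'e \<Rightarrow> real) \<Rightarrow> bool" where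
  "lipschitz_multiplicative C1 C2 C3 sc d \<longleftrightarrow>
     C1 \<ge> 1 \<and> C2 \<ge> 0 \<and> C3 \<ge> 0 \<and>
     (\<forall>l x y. norm l * d x y / C1 - C2 * norm l - C3 \<le> d (sc l x) (sc l y) \<and>
              d (sc l x) (sc l y) \<le> C1 * norm l * d x y + C2 * norm l + C3)"

definition asym_dist :: "('k::real_normed_div_algebra \<Rightarrow> 'e \<Rightarrow> 'e) \<Rightarrow> ('e \<Rightarrow> 'e \<Rightarrow> real) \<Rightarrow> 'e \<Rightarrow> 'e \<Rightarrow> real" where
  "asym_dist sc d x y = lim (\<lambda>n. d (sc (of_nat n) x) (sc (of_nat n) y) / real n)"

definition E0 :: "('k::real_normed_div_algebra \<Rightarrow> 'e::ab_group_add \<Rightarrow> 'e) \<Rightarrow> ('e \<Rightarrow> 'e \<Rightarrow> real) \<Rightarrow> 'e set" where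
  "E0 sc d = {x. \<forall>u::'k. norm u = 1 \<longrightarrow> asym_dist sc d (sc u x) 0 = 0}"

definition linear_subspace :: "('k \<Rightarrow> 'e::ab_group_add \<Rightarrow> 'e) \<Rightarrow> 'e set \<Rightarrow> bool" where
  "linear_subspace sc S \<longleftrightarrow> 0 \<in> S \<and> (\<forall>x\<in>S. \<forall>y\<in>S. x + y \<in> S) \<and> (\<forall>a. \<forall>x\<in>S. sc a x \<in> S)"

end

theory Submission imports Defs begin

lemma fekete_aux:
  fixes b :: "nat \<Rightarrow> real"
  assumes sub: "\<And>m n. b (m+n) \<le> b m + b n"
  shows "b (q*k + r) \<le> real q * b k + b r"
proof (induction q)
  case 0 then show ?case by simp
next
  case (Suc q)
  have "b (Suc q * k + r) = b (k + (q*k + r))" by (simp add: algebra_simps)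
  also have "\<dots> \<le> b k + b (q*k+r)" by (rule sub)
  also have "\<dots> \<le> b k + (real q * b k + b r)" using Suc by simp
  finally show ?case by (simp add: algebra_simps)
qed

lemma fekete:
  fixes b :: "nat \<Rightarrow> real"
  assumes sub: "\<And>m n. b (m+n) \<le> b m + b n" and nn: "\<And>n. b n \<ge> 0"
  shows "convergent (\<lambda>n. b n / real n)"
proof -
  define S where "S = (\<lambda>n. b n / real n) ` {1..}"
  define L where "L = Inf S"
  have bdd: "bdd_below S" unfolding S_def using nn by (intro bdd_belowI[of _ 0]) auto
  have ne: "S \<noteq> {}" unfolding S_def by auto
  have low: "L \<le> b n / real n" if "n \<ge> 1" for n
    unfolding L_def using bdd that by (intro cInf_lower) (auto simp: S_def)
  have "(\<lambda>n. b n / real n) \<longlonglongrightarrow> L"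
  proof (rule LIMSEQ_I)
    fix e :: real assume e: "e > 0"
    have "L < L + e/2" using e by simp
    then obtain s where "s \<in> S" "s < L + e/2" unfolding L_def using ne by (meson cInf_lessD)
    then obtain k where k: "k \<ge> 1" "b k / real k < L + e/2" unfolding S_def by auto
    define M where "M = Max (b ` {..<k})"
    have bM: "b r \<le> M" if "r < k" for r unfolding M_def using that by auto
    have M0: "M \<ge> 0" using bM[of 0] nn[of 0] k by simp
    obtain N :: nat where N: "real N > 2 * M / e" using reals_Archimedean2 by blast
    show "\<exists>no. \<forall>n\<ge>no. norm (b n / real n - L) < e"
    proof (intro exI[of _ "Suc N"] allI impI)
      fix n assume n: "n \<ge> Suc N"
      hence npos: "real n > 0" by simp
      define q where "q = n div k"
      define r where "r = n mod k"
      have nqr: "n = q * k + r" unfolding q_def r_def by simp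
      have rk: "r < k" unfolding r_def using k by simp
      have "b n \<le> real q * b k + b r" using fekete_aux[of b q k r, OF sub] nqr by simp
      also have "\<dots> \<le> real q * b k + M" using bM[OF rk] by simp
      finally have bn: "b n \<le> real q * b k + M" .
      have qk: "real q * real k \<le> real n" using nqr by (metis of_nat_le_iff of_nat_mult le_add1)
      have "real q * b k = (real q * real k) * (b k / real k)" using k by simp
      also have "\<dots> \<le> real n * (b k / real k)"
        using qk nn[of k] by (intro mult_right_mono) auto
      finally have "b n / real n \<le> (real n * (b k / real k) + M) / real n"
        using bn npos by (intro divide_right_mono) auto
      also have "\<dots> = b k / real k + M / real n" using npos by (simp add: field_simps)
      also have "M / real n < e/2"
      proof -
        have "real n > 2 * M / e" using N n by simp
        hence "e * real n > 2 * M" using e by (simp add: field_simps)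
        thus ?thesis using npos by (simp add: field_simps)
      qed
      finally have up: "b n / real n < L + e" using k by simp
      have "L \<le> b n / real n" using low n by simp
      thus "norm (b n / real n - L) < e" using up by simp
    qed
  qed
  thus ?thesis by (auto simp: convergent_def)
qed

theorem proposition5:
  fixes sc :: "'k::real_normed_div_algebra \<Rightarrow> 'e::ab_group_add \<Rightarrow> 'e"
    and d :: "'e \<Rightarrow> 'e \<Rightarrow> real"
    and C0 C1 C2 C3 :: real
  assumes "metric_vector_space sc d"
    and "translation_invariant_const C0 d"
    and "lipschitz_multiplicative C1 C2 C3 sc d"
  shows "linear_subspace sc (E0 sc d) \<and> closedin (Metric_space.mtopology UNIV d) (E0 sc d)"
proof -
  have lv: "left_vector_space sc" and ms: "Metric_space UNIV d"
    and cont: "continuous_map (prod_topology (euclidean :: 'k topology) (Metric_space.mtopology UNIV d))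
        (Metric_space.mtopology UNIV d) (\<lambda>(a, x). sc a x)"
    using assms(1) unfolding metric_vector_space_def by auto
  interpret M: Metric_space UNIV d by (rule ms)
  have sadd: "\<And>a x y. sc a (x + y) = sc a x + sc a y"
    and sadd2: "\<And>a b x. sc (a + b) x = sc a x + sc b x"
    and smul: "\<And>a b x. sc (a * b) x = sc a (sc b x)"
    and sone: "\<And>x. sc 1 x = x" using lv unfolding left_vector_space_def by auto
  have ti: "\<And>x y z. d (x + z) (y + z) \<le> d x y + C0"
    using assms(2) unfolding translation_invariant_const_def by auto
  have C1: "C1 \<ge> 1" and C2: "C2 \<ge> 0" and C3: "C3 \<ge> 0"
    and lipu: "\<And>l x y. d (sc l x) (sc l y) \<le> C1 * norm l * d x y + C2 * norm l + C3"
    using assms(3) unfolding lipschitz_multiplicative_def by auto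
  have sc0: "sc a 0 = 0" for a using sadd[of a 0 0] by simp
  have s0: "sc 0 x = 0" for x using sadd2[of 0 0 x] by simp
  have C0: "C0 \<ge> 0" using ti[of 0 0 0] by simp
  have tri: "d x z \<le> d x y + d y z" for x y z using M.triangle by simp
  define a where "a z n = d (sc (of_nat n) z) 0" for z n
  define D where "D z = lim (\<lambda>n. a z n / real n)" for z
  have asym: "asym_dist sc d z 0 = D z" for z
    unfolding asym_dist_def D_def a_def sc0 by simp
  have addz: "d (p + q) 0 \<le> d p 0 + d q 0 + C0" for p q
  proof -
    have "d (p + q) 0 \<le> d (p + q) (0 + q) + d (0 + q) 0" by (rule tri)
    also have "\<dots> \<le> d p 0 + C0 + d q 0" using ti[of p q 0] by (simp only: add_0_left)
    finally show ?thesis by simp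
  qed
  have conv: "(\<lambda>n. a z n / real n) \<longlonglongrightarrow> D z" for z
  proof -
    have "convergent (\<lambda>n. (a z n + C0) / real n)"
    proof (rule fekete)
      fix m n
      have "sc (of_nat (m+n)) z = sc (of_nat m) z + sc (of_nat n) z"
        by (simp add: sadd2)
      thus "a z (m + n) + C0 \<le> a z m + C0 + (a z n + C0)"
        unfolding a_def using addz[of "sc (of_nat m) z" "sc (of_nat n) z"] by simp
    next
      fix n show "0 \<le> a z n + C0" unfolding a_def using C0 by simp
    qed
    then obtain L where L: "(\<lambda>n. (a z n + C0) / real n) \<longlonglongrightarrow> L" by (auto simp: convergent_def)
    have "(\<lambda>n. C0 / real n) \<longlonglongrightarrow> 0" by (rule tendsto_divide_0[OF tendsto_const]) (rule filterlim_at_top_imp_at_infinity[OF filterlim_real_sequentially])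
    from tendsto_diff[OF L this] have "(\<lambda>n. a z n / real n) \<longlonglongrightarrow> L"
      by (simp add: add_divide_distrib)
    thus ?thesis unfolding D_def by (simp add: limI)
  qed
  have Dnn: "D z \<ge> 0" for z
    by (rule LIMSEQ_le_const[OF conv]) (auto simp: a_def)
  have C0n: "(\<lambda>n. c / real n) \<longlonglongrightarrow> 0" for c
    by (rule tendsto_divide_0[OF tendsto_const]) (rule filterlim_at_top_imp_at_infinity[OF filterlim_real_sequentially])
  have Dadd: "D (p + q) \<le> D p + D q" for p q
  proof (rule LIMSEQ_le[OF conv])
    show "(\<lambda>n. a p n / real n + a q n / real n + C0 / real n) \<longlonglongrightarrow> D p + D q"
      using tendsto_add[OF tendsto_add[OF conv conv] C0n] by simp
    show "\<exists>N. \<forall>n\<ge>N. a (p + q) n / real n \<le> a p n / real n + a q n / real n + C0 / real n"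
      unfolding a_def by (auto simp: sadd add_divide_distrib[symmetric] intro!: divide_right_mono addz)
  qed
  have Dsc: "D (sc l z) \<le> C1 * norm l * D z" for l z
  proof (rule LIMSEQ_le[OF conv])
    show "(\<lambda>n. C1 * norm l * (a z n / real n) + (C2 * norm l + C3) / real n) \<longlonglongrightarrow> C1 * norm l * D z"
      using tendsto_add[OF tendsto_mult_left[OF conv] C0n] by simp
    show "\<exists>N. \<forall>n\<ge>N. a (sc l z) n / real n \<le> C1 * norm l * (a z n / real n) + (C2 * norm l + C3) / real n"
    proof (intro exI allI impI)
      fix n :: nat
      have "sc (of_nat n) (sc l z) = sc l (sc (of_nat n) z)"
        by (metis smul mult_of_nat_commute)
      hence "a (sc l z) n \<le> C1 * norm l * a z n + (C2 * norm l + C3)"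
        unfolding a_def using lipu[of l "sc (of_nat n) z" 0] by (simp add: sc0)
      thus "a (sc l z) n / real n \<le> C1 * norm l * (a z n / real n) + (C2 * norm l + C3) / real n"
        by (simp add: add_divide_distrib[symmetric] divide_right_mono)
    qed
  qed
  have Dhom: "D (sc (of_nat m) z) = real m * D z" for m z
  proof (cases "m = 0")
    case True
    have "D 0 = 0" unfolding D_def a_def by (simp add: sc0)
    thus ?thesis using True by (simp add: s0)
  next
    case False
    have sm: "strict_mono (\<lambda>n. n * m)" using False by (auto simp: strict_mono_def)
    have "((\<lambda>n. a z n / real n) \<circ> (\<lambda>n. n * m)) \<longlonglongrightarrow> D z"
      by (rule LIMSEQ_subseq_LIMSEQ[OF conv sm])
    hence "(\<lambda>n. real m * ((\<lambda>n. a z n / real n) \<circ> (\<lambda>n. n * m)) n) \<longlonglongrightarrow> real m * D z"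
      by (rule tendsto_mult_left)
    moreover have "real m * ((\<lambda>n. a z n / real n) \<circ> (\<lambda>n. n * m)) n = a (sc (of_nat m) z) n / real n" for n
    proof -
      have "sc (of_nat n) (sc (of_nat m) z) = sc (of_nat (n * m)) z" by (simp add: smul[symmetric])
      thus ?thesis unfolding a_def using False by simp
    qed
    ultimately have "(\<lambda>n. a (sc (of_nat m) z) n / real n) \<longlonglongrightarrow> real m * D z" by simp
    thus ?thesis using conv LIMSEQ_unique by blast
  qed
  have Dclose: "D X \<le> C1 * d X Y + C2 + D Y" for X Y
  proof (rule LIMSEQ_le[OF conv])
    show "(\<lambda>n. C1 * d X Y + C2 + C3 / real n + a Y n / real n) \<longlonglongrightarrow> C1 * d X Y + C2 + D Y"
      using tendsto_add[OF tendsto_add[OF tendsto_const C0n] conv] by simp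
    show "\<exists>N. \<forall>n\<ge>N. a X n / real n \<le> C1 * d X Y + C2 + C3 / real n + a Y n / real n"
    proof (intro exI[of _ 1] allI impI)
      fix n :: nat assume n: "n \<ge> 1"
      have "a X n \<le> d (sc (of_nat n) X) (sc (of_nat n) Y) + a Y n" unfolding a_def by (rule tri)
      also have "\<dots> \<le> C1 * real n * d X Y + C2 * real n + C3 + a Y n"
        using lipu[of "of_nat n" X Y] by simp
      finally have "a X n / real n \<le> (C1 * real n * d X Y + C2 * real n + C3 + a Y n) / real n"
        by (simp add: divide_right_mono)
      also have "\<dots> = C1 * d X Y + C2 + C3 / real n + a Y n / real n"
        using n by (simp add: field_simps)
      finally show "a X n / real n \<le> C1 * d X Y + C2 + C3 / real n + a Y n / real n" .
    qed
  qed
  have E0D: "x \<in> E0 sc d \<longleftrightarrow> (\<forall>u::'k. norm u = 1 \<longrightarrow> D (sc u x) = 0)" for x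
    unfolding E0_def asym by simp
  have lin: "linear_subspace sc (E0 sc d)"
    unfolding linear_subspace_def
  proof (intro conjI ballI allI)
    have "D 0 = 0" unfolding D_def a_def by (simp add: sc0)
    thus "0 \<in> E0 sc d" unfolding E0D by (simp add: sc0)
  next
    fix x y assume x: "x \<in> E0 sc d" and y: "y \<in> E0 sc d"
    show "x + y \<in> E0 sc d" unfolding E0D
    proof (intro allI impI)
      fix u :: 'k assume u: "norm u = 1"
      have "D (sc u (x + y)) \<le> D (sc u x) + D (sc u y)" by (simp add: sadd Dadd)
      thus "D (sc u (x + y)) = 0" using x y u Dnn unfolding E0D by (metis add.right_neutral antisym)
    qed
  next
    fix c :: 'k and x assume x: "x \<in> E0 sc d"
    show "sc c x \<in> E0 sc d" unfolding E0D
    proof (intro allI impI)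
      fix u :: 'k assume u: "norm u = 1"
      hence u0: "u \<noteq> 0" by auto
      have "u * c = (u * c * inverse u) * u" using u0 by (simp add: mult.assoc)
      hence "sc u (sc c x) = sc (u * c * inverse u) (sc u x)" by (metis smul)
      hence "D (sc u (sc c x)) \<le> C1 * norm (u * c * inverse u) * D (sc u x)" using Dsc by simp
      thus "D (sc u (sc c x)) = 0" using x u Dnn unfolding E0D by (metis mult_zero_right antisym)
    qed
  qed
  have cl: "closedin M.mtopology (E0 sc d)"
    unfolding M.closedin_metric
  proof (intro conjI allI impI)
    show "E0 sc d \<subseteq> UNIV" by simp
  next
    fix x assume "x \<in> UNIV - E0 sc d"
    then obtain u :: 'k where u: "norm u = 1" "D (sc u x) \<noteq> 0" using E0D[of x] by auto
    define c where "c = D (sc u x)"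
    have c: "c > 0" using u Dnn[of "sc u x"] unfolding c_def by linarith
    obtain m :: nat where m: "real m > (C1 + C2) / c" using reals_Archimedean2 by blast
    hence mc: "real m * c > C1 + C2" using c by (simp add: field_simps)
    define w where "w = (of_nat m :: 'k) * u"
    have cw: "continuous_map M.mtopology M.mtopology (sc w)"
    proof -
      have "continuous_map M.mtopology (prod_topology (euclidean :: 'k topology) M.mtopology) (\<lambda>x. (w, x))"
        by (intro continuous_map_pairedI continuous_map_id) (simp_all add: continuous_map_id[unfolded id_def])
      from continuous_map_compose[OF this cont] show ?thesis by (simp add: o_def)
    qed
    have "openin M.mtopology {y. sc w y \<in> M.mball (sc w x) 1}"
      using openin_continuous_map_preimage[OF cw M.openin_mball] by (simp add: vimage_def)
    moreover have "x \<in> {y. sc w y \<in> M.mball (sc w x) 1}" by simp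
    ultimately obtain r where r: "r > 0" "M.mball x r \<subseteq> {y. sc w y \<in> M.mball (sc w x) 1}"
      unfolding M.openin_mtopology by blast
    show "\<exists>r>0. disjnt (E0 sc d) (M.mball x r)"
    proof (intro exI conjI)
      show "r > 0" by fact
      show "disjnt (E0 sc d) (M.mball x r)" unfolding disjnt_def
      proof (rule ccontr)
        assume "E0 sc d \<inter> M.mball x r \<noteq> {}"
        then obtain y where y: "y \<in> E0 sc d" "y \<in> M.mball x r" by auto
        have dxy: "d (sc w x) (sc w y) < 1" using r y by auto
        have "D (sc w y) = real m * D (sc u y)" unfolding w_def by (simp add: smul Dhom)
        also have "\<dots> = 0" using y u unfolding E0D by simp
        finally have Dy: "D (sc w y) = 0" .
        have Dx: "D (sc w x) = real m * c" unfolding w_def c_def by (simp add: smul Dhom)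
        have "real m * c \<le> C1 * d (sc w x) (sc w y) + C2" using Dclose[of "sc w x" "sc w y"] Dx Dy by simp
        also have "\<dots> < C1 * 1 + C2" using dxy C1 by simp
        finally show False using mc by simp
      qed
    qed
  qed
  show ?thesis using lin cl by simp
qed
end
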